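(* Let $n\ge 4$ and let $D_n$ be the tree on vertex set $\{1,\ldots,n\}$ with edges $\{1,3\}$, $\{2,3\}$ and $\{i,i+1\}$ for $3\le i\le n-1$, with adjacency matrix $A$. Let $e$ be the all-ones vector of length $n$ and $W(D_n)=[e,Ae,\ldots,A^{n-1}e]$. Then $\operatorname{rank} W(D_n)=n-1$ if $4\nmid n$, and $\operatorname{rank} W(D_n)=n-2$ if $4\mid n$.
   Context: $W(D_n)$ is the walk matrix of $D_n$. *)

theory Defs
  imports "Jordan_Normal_Form.DL_Rank"
begin

definition Dn_edge :: "nat \<Rightarrow> nat \<Rightarrow> nat \<Rightarrow> bool" where
  "Dn_edge n u v \<longleftrightarrow> u \<in> {1..n} \<and> v \<in> {1..n} \<and>
     ({u, v} = {1, 3} \<or> {u, v} = {2, 3} \<or>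
      (\<exists>i. 3 \<le> i \<and> i \<le> n - 1 \<and> {u, v} = {i, i + 1}))"

text \<open>Adjacency matrix (row/column index k corresponds to vertex k+1).\<close>
definition Dn_adj :: "nat \<Rightarrow> real mat" where
  "Dn_adj n = mat n n (\<lambda>(i, j). if Dn_edge n (i + 1) (j + 1) then 1 else 0)"

definition walk_matrix :: "nat \<Rightarrow> real mat \<Rightarrow> real mat" where
  "walk_matrix n A = mat n n (\<lambda>(i, j). ((A ^\<^sub>m j) *\<^sub>v vec n (\<lambda>_. 1)) $ i)"

end

theory Submission
  imports Defs "HOL-Computational_Algebra.Polynomial"
begin


lemma Dn_edge_sym: "Dn_edge n u v = Dn_edge n v u"
  unfolding Dn_edge_def by (auto simp: insert_commute)

lemma Dn_adj_carrier: "Dn_adj n \<in> carrier_mat n n"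
  unfolding Dn_adj_def by simp

lemma Dn_adj_transpose: "transpose_mat (Dn_adj n) = Dn_adj n"
  by (rule eq_matI) (auto simp: Dn_adj_def Dn_edge_sym)

definition nbrs :: "nat \<Rightarrow> nat \<Rightarrow> nat set" where
  "nbrs n i = (if i \<le> 1 then {2} else if i = 2 then {0,1,3} else if i = n - 1 then {n-2} else {i-1, i+1})"

lemma Dn_edge_iff:
  assumes "n \<ge> 4" "i < n" "j < n"
  shows "Dn_edge n (i+1) (j+1) \<longleftrightarrow> j \<in> nbrs n i"
proof
  assume "Dn_edge n (i+1) (j+1)"
  then have "{i+1, j+1} = {1, 3} \<or> {i+1, j+1} = {2, 3} \<or>
      (\<exists>k. 3 \<le> k \<and> k \<le> n - 1 \<and> {i+1, j+1} = {k, k + 1})" unfolding Dn_edge_def by blast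
  then consider "i = 0 \<and> j = 2 \<or> i = 2 \<and> j = 0" | "i = 1 \<and> j = 2 \<or> i = 2 \<and> j = 1"
     | k where "3 \<le> k" "k \<le> n - 1" "i + 1 = k \<and> j = k \<or> i = k \<and> j + 1 = k"
    unfolding doubleton_eq_iff by auto
  then show "j \<in> nbrs n i"
  proof cases
    case 1 then show ?thesis by (auto simp: nbrs_def)
  next
    case 2 then show ?thesis by (auto simp: nbrs_def)
  next
    case 3 then show ?thesis using assms by (auto simp: nbrs_def)
  qed
next
  assume j: "j \<in> nbrs n i"
  show "Dn_edge n (i+1) (j+1)"
  proof (cases "i \<le> 1")
    case True
    then have "i = 0 \<or> i = 1" by auto
    then show ?thesis using j assms by (auto simp: nbrs_def Dn_edge_def)
  next
    case False
    note F = False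
    show ?thesis
    proof (cases "i = 2")
      case True
      then have "j = 0 \<or> j = 1 \<or> j = 3" using j by (auto simp: nbrs_def)
      then show ?thesis using True assms unfolding Dn_edge_def
        by (elim disjE) (auto simp: doubleton_eq_iff intro!: exI[of _ 3])
    next
      case False
      then have "j = i - 1 \<or> (j = i + 1 \<and> i \<noteq> n - 1)" using j F by (auto simp: nbrs_def split: if_splits)
      then show ?thesis
      proof (elim disjE)
        assume "j = i - 1"
        then show ?thesis using False F assms unfolding Dn_edge_def
          by (auto simp: doubleton_eq_iff intro!: exI[of _ i])
      next
        assume "j = i + 1 \<and> i \<noteq> n - 1"
        then show ?thesis using False F assms unfolding Dn_edge_def
          by (auto simp: doubleton_eq_iff intro!: exI[of _ "i+1"])
      qed
    qed
  qed
qed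

lemma Dn_adj_mult:
  assumes "n \<ge> 4" "x \<in> carrier_vec n" "i < n"
  shows "(Dn_adj n *\<^sub>v x) $ i = sum (\<lambda>j. x $ j) (nbrs n i)"
proof -
  have "(Dn_adj n *\<^sub>v x) $ i = (\<Sum>j\<in>{0..<n}. (if Dn_edge n (i+1) (j+1) then 1 else 0) * x $ j)"
    using assms by (simp add: Dn_adj_def scalar_prod_def)
  also have "\<dots> = (\<Sum>j\<in>{0..<n}. (if j \<in> nbrs n i then x $ j else 0))"
    using Dn_edge_iff[OF assms(1,3)] by (intro sum.cong) auto
  also have "\<dots> = (\<Sum>j\<in>{0..<n} \<inter> nbrs n i. x $ j)"
    by (simp add: sum.inter_restrict)
  also have "{0..<n} \<inter> nbrs n i = nbrs n i" using assms unfolding nbrs_def by auto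
  finally show ?thesis .
qed

lemma Dn_adj_mult':
  assumes "n \<ge> 4" "x \<in> carrier_vec n" "i < n"
  shows "(Dn_adj n *\<^sub>v x) $ i = (if i \<le> 1 then x$2 else if i = 2 then x$0 + x$1 + x$3
     else if i = n - 1 then x$(n-2) else x$(i-1) + x$(i+1))"
  using assms unfolding Dn_adj_mult[OF assms] nbrs_def by auto

definition wv :: "nat \<Rightarrow> real \<Rightarrow> real vec" where
  "wv n t = vec n (\<lambda>i. if i < 2 then sin (real (n-1) * t) / 2 else sin (real (n - i) * t))"

lemma wv_carrier: "wv n t \<in> carrier_vec n" unfolding wv_def by simp

lemma sin_pm: "sin (b + t) + sin (b - t) = 2 * cos t * sin (b::real)"
  by (simp add: Transcendental.sin_add Transcendental.sin_diff algebra_simps)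

lemma wv_eig:
  assumes n: "n \<ge> 4" and c: "cos (real (n-1) * t) = 0"
  shows "Dn_adj n *\<^sub>v wv n t = (2 * cos t) \<cdot>\<^sub>v wv n t"
proof (rule eq_vecI)
  show "dim_vec (Dn_adj n *\<^sub>v wv n t) = dim_vec ((2 * cos t) \<cdot>\<^sub>v wv n t)"
    by (simp add: Dn_adj_def wv_def)
  fix i assume "i < dim_vec ((2 * cos t) \<cdot>\<^sub>v wv n t)"
  then have i: "i < n" by (simp add: wv_def)
  have L: "(Dn_adj n *\<^sub>v wv n t) $ i = (if i \<le> 1 then wv n t $2 else if i = 2 then wv n t $0 + wv n t $1 + wv n t $3
     else if i = n - 1 then wv n t $(n-2) else wv n t $(i-1) + wv n t $(i+1))"
    by (rule Dn_adj_mult'[OF n wv_carrier i])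
  have R: "((2 * cos t) \<cdot>\<^sub>v wv n t) $ i = 2 * cos t * wv n t $ i" using i by (simp add: wv_def)
  show "(Dn_adj n *\<^sub>v wv n t) $ i = ((2 * cos t) \<cdot>\<^sub>v wv n t) $ i"
  proof -
    consider "i \<le> 1" | "i = 2" | "i = n - 1" | "3 \<le> i" "i < n - 1" using i n by linarith
    then show ?thesis
    proof cases
      case 1
      have e: "real (n - 2) * t = real (n-1) * t - t" using n by (simp add: of_nat_diff algebra_simps)
      have "sin (real (n - 2) * t) = cos t * sin (real (n-1) * t)"
        unfolding e sin_diff c by simp
      then show ?thesis using 1 n i unfolding L R by (simp add: wv_def)
    next
      case 2
      have e1: "real (n - 1) * t = real (n-2) * t + t" and e3: "real (n - 3) * t = real (n-2) * t - t"
        using n by (simp_all add: of_nat_diff algebra_simps)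
      have "sin (real (n - 1) * t) + sin (real (n - 3) * t) = 2 * cos t * sin (real (n-2) * t)"
        unfolding e1 e3 sin_pm ..
      then show ?thesis using 2 n i unfolding L R by (simp add: wv_def)
    next
      case 3
      have e: "n - (n - 2) = 2" "n - (n-1) = 1" using n by auto
      have "sin (2 * t) = 2 * cos t * sin t" by (simp add: sin_double)
      then show ?thesis using 3 n i unfolding L R by (simp add: wv_def e)
    next
      case 4
      have e1: "real (n - (i - 1)) * t = real (n-i) * t + t" and e3: "real (n - (i+1)) * t = real (n-i) * t - t"
        using 4 by (simp_all add: of_nat_diff algebra_simps)
      have "sin (real (n - (i - 1)) * t) + sin (real (n - (i+1)) * t) = 2 * cos t * sin (real (n-i) * t)"
        unfolding e1 e3 sin_pm ..
      moreover have "\<not> i - 1 < 2" "\<not> i + 1 < 2" using 4 by auto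
      ultimately show ?thesis using 4 n i unfolding L R by (simp add: wv_def)
    qed
  qed
qed

lemma prod_sum_sin: "2 * sin (a::real) * sin b = cos (b - a) - cos (b + a)"
  by (simp add: Transcendental.cos_add Transcendental.cos_diff)

lemma sin_sum_tele:
  fixes t :: real
  shows "2 * sin (t/2) * (\<Sum>k=1..N. sin (real k * t)) = cos (t/2) - cos ((real N + 1/2) * t)"
proof (induction N)
  case 0 then show ?case by simp
next
  case (Suc N)
  have a: "(real N + 1/2) * t = (real N + 1) * t - t/2" and b: "(real (Suc N) + 1/2) * t = (real N + 1) * t + t/2"
    by (simp_all add: algebra_simps)
  have "2 * sin (t/2) * sin (real (Suc N) * t) = cos ((real N + 1/2) * t) - cos ((real (Suc N) + 1/2) * t)"
    unfolding a b prod_sum_sin by (simp add: add.commute)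
  then show ?case using Suc by (simp add: algebra_simps)
qed

lemma wv_sum:
  assumes n: "n \<ge> 4"
  shows "wv n t \<bullet> vec n (\<lambda>_. 1) = (\<Sum>k=1..n-1. sin (real k * t))"
proof -
  have "wv n t \<bullet> vec n (\<lambda>_. 1) = (\<Sum>i\<in>{0..<n}. wv n t $ i)" by (simp add: scalar_prod_def)
  also have "{0..<n} = {0,1} \<union> {2..<n}" using n by auto
  also have "(\<Sum>i\<in>{0,1} \<union> {2..<n}. wv n t $ i) = wv n t $ 0 + wv n t $ 1 + (\<Sum>i\<in>{2..<n}. wv n t $ i)"
    by (subst sum.union_disjoint) auto
  also have "(\<Sum>i\<in>{2..<n}. wv n t $ i) = (\<Sum>i\<in>{2..<n}. sin (real (n - i) * t))"
    by (intro sum.cong) (auto simp: wv_def)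
  also have "\<dots> = (\<Sum>k\<in>{1..n-2}. sin (real k * t))"
    by (rule sum.reindex_bij_witness[of _ "\<lambda>k. n - k" "\<lambda>i. n - i"]) auto
  also have "wv n t $ 0 + wv n t $ 1 = sin (real (n-1) * t)" using n by (simp add: wv_def)
  also have "sin (real (n-1) * t) + (\<Sum>k\<in>{1..n-2}. sin (real k * t)) = (\<Sum>k=1..n-1. sin (real k * t))"
  proof -
    have "n - 1 = Suc (n - 2)" using n by auto
    then show ?thesis using n by (simp add: add.commute)
  qed
  finally show ?thesis .
qed

definition th :: "nat \<Rightarrow> nat \<Rightarrow> real" where
  "th n j = real (2*j+1) * pi / (2 * real (n-1))"

lemma th_bounds:
  assumes "n \<ge> 4" "j < n - 1"
  shows "0 < th n j" "th n j < pi"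
proof -
  have p: "real (n - 1) > 0" using assms by simp
  show "0 < th n j" unfolding th_def using p by simp
  have "real (2*j+1) < 2 * real (n-1)" using assms by linarith
  then have "real (2*j+1) * pi < 2 * real (n-1) * pi" by simp
  then show "th n j < pi" unfolding th_def using p by (simp add: divide_less_eq)
qed

lemma th_mul:
  assumes "n \<ge> 4"
  shows "real (n-1) * th n j = real (Suc (2*j)) * pi / 2"
  using assms unfolding th_def by (simp add: field_simps)

lemma th_cos: assumes "n \<ge> 4" shows "cos (real (n-1) * th n j) = 0"
  unfolding th_mul[OF assms] using cos_pi_eq_zero[of j] by (simp add: mult.commute)

lemma th_sin: assumes "n \<ge> 4" shows "sin (real (n-1) * th n j) = (-1)^j"
  by (simp only: th_mul[OF assms] sin_cos_npi)

lemma S_formula: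
  assumes n: "n \<ge> 4"
  shows "2 * sin (th n j / 2) * (wv n (th n j) \<bullet> vec n (\<lambda>_. 1)) = cos (th n j / 2) + (-1)^j * sin (th n j / 2)"
proof -
  let ?t = "th n j"
  have e: "(real (n-1) + 1/2) * ?t = real (n-1) * ?t + ?t/2" by (simp add: algebra_simps)
  have "2 * sin (?t / 2) * (wv n ?t \<bullet> vec n (\<lambda>_. 1)) = cos (?t/2) - cos ((real (n-1) + 1/2) * ?t)"
    unfolding wv_sum[OF n] sin_sum_tele ..
  also have "\<dots> = cos (?t / 2) + (-1)^j * sin (?t / 2)"
    unfolding e Transcendental.cos_add th_cos[OF n] th_sin[OF n] by simp
  finally show ?thesis .
qed

lemma S_nonzero:
  assumes n: "n \<ge> 4" and j: "j < n - 1" and nz: "\<not> (4 dvd n \<and> 2*j+2 = n)"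
  shows "wv n (th n j) \<bullet> vec n (\<lambda>_. 1) \<noteq> 0"
proof
  let ?t = "th n j"
  assume S: "wv n ?t \<bullet> vec n (\<lambda>_. 1) = 0"
  have h: "cos (?t/2) + (-1)^j * sin (?t/2) = 0" using S_formula[OF n, of j] S by simp
  have c: "cos (?t/2) > 0" using th_bounds[OF n j] by (intro cos_gt_zero) auto
  have s: "sin (?t/2) > 0" using th_bounds[OF n j] by (intro sin_gt_zero) auto
  have odd: "odd j"
  proof (rule ccontr)
    assume "\<not> odd j"
    then have "(-1::real)^j = 1" by simp
    then show False using h c s by simp
  qed
  then have "(-1::real)^j = -1" by simp
  then have cs: "cos (?t/2) = sin (?t/2)" using h by simp
  have "cos ?t = cos (2 * (?t/2))" by simp
  also have "\<dots> = (cos (?t/2))\<^sup>2 - (sin (?t/2))\<^sup>2" by (rule cos_double)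
  also have "\<dots> = 0" unfolding cs by simp
  finally have c0: "cos ?t = cos (pi/2)" by simp
  have "?t = pi/2"
    by (rule cos_inj_pi) (use th_bounds[OF n j] c0 in auto)
  then have e: "real (2*j+1) * pi / (2 * real (n-1)) = pi / 2" unfolding th_def .
  have p: "2 * real (n-1) > 0" using n by simp
  have "real (2*j+1) * pi = pi / 2 * (2 * real (n-1))"
    using e p by (simp add: divide_eq_eq)
  then have "real (2*j+1) * pi = real (n-1) * pi" by simp
  then have "real (2*j+1) = real (n-1)" by simp
  then have "2*j+2 = n" using n by linarith
  moreover from odd obtain m where "j = 2*m+1" by (auto elim: oddE)
  ultimately have "n = 4*(m+1)" by simp
  then show False using nz \<open>2*j+2 = n\<close> by simp
qed

lemma aux_pi: "(a::real) \<noteq> 0 \<Longrightarrow> a * pi / (2 * a) = pi / 2"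
  by simp

lemma S_zero:
  assumes n: "n \<ge> 4" and d: "4 dvd n"
  shows "n div 2 - 1 < n - 1" "th n (n div 2 - 1) = pi/2"
    "wv n (th n (n div 2 - 1)) \<bullet> vec n (\<lambda>_. 1) = 0"
proof -
  obtain m where m: "n = 4*m" using d by auto
  then have j: "n div 2 - 1 = 2*m - 1" "m \<ge> 1" using n by auto
  show "n div 2 - 1 < n - 1" using n by auto
  have "2 * (n div 2 - 1) + 1 = n - 1" using j m by simp
  then have "th n (n div 2 - 1) = real (n-1) * pi / (2 * real (n-1))" unfolding th_def by simp
  also have "\<dots> = pi / 2"
  proof -
    have "real (n-1) \<noteq> 0" using n by simp
    then show ?thesis by (rule aux_pi)
  qed
  finally show t: "th n (n div 2 - 1) = pi/2" .
  have o: "odd (n div 2 - 1)" using j by (cases m) auto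
  have mo: "(-1::real)^(n div 2 - 1) = -1" using o by simp
  have "2 * sin (pi/4) * (wv n (pi/2) \<bullet> vec n (\<lambda>_. 1)) = cos (pi/4) + (-1) * sin (pi/4)"
    using S_formula[OF n, of "n div 2 - 1"] unfolding t mo by simp
  also have "\<dots> = 0" by (simp add: cos_45 sin_45)
  finally have "2 * sin (pi/4) * (wv n (pi/2) \<bullet> vec n (\<lambda>_. 1)) = 0" .
  moreover have "sin (pi/4) \<noteq> 0" by (simp add: sin_45)
  ultimately show "wv n (th n (n div 2 - 1)) \<bullet> vec n (\<lambda>_. 1) = 0" unfolding t by simp
qed

lemma th_inj:
  assumes n: "n \<ge> 4"
  shows "inj_on (\<lambda>j. 2 * cos (th n j)) {..<n-1}"
proof (rule inj_onI)
  fix i j assume i: "i \<in> {..<n-1}" and j: "j \<in> {..<n-1}" and e: "2 * cos (th n i) = 2 * cos (th n j)"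
  have "i < n - 1" "j < n - 1" using i j by auto
  note bi = th_bounds[OF n this(1)] and bj = th_bounds[OF n this(2)]
  have ce: "cos (th n i) = cos (th n j)" using e by simp
  have "th n i = th n j"
    by (rule cos_inj_pi[OF less_imp_le[OF bi(1)] less_imp_le[OF bi(2)] less_imp_le[OF bj(1)] less_imp_le[OF bj(2)] ce])
  then have e: "real (2*i+1) * pi / (2 * real (n-1)) = real (2*j+1) * pi / (2 * real (n-1))"
    unfolding th_def .
  have p: "2 * real (n-1) \<noteq> 0" using n by simp
  then have "real (2*i+1) * pi = real (2*j+1) * pi" using e by simp
  then show "i = j" by simp
qed



lemma Dn_adj_dims[simp]: "dim_row (Dn_adj n) = n" "dim_col (Dn_adj n) = n"
  by (simp_all add: Dn_adj_def)

abbreviation "ee n \<equiv> vec n (\<lambda>_. 1::real)"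

lemma dot_sym:
  assumes "w \<in> carrier_vec n" "x \<in> carrier_vec n"
  shows "w \<bullet> (Dn_adj n *\<^sub>v x) = (Dn_adj n *\<^sub>v w) \<bullet> x"
  using transpose_vec_mult_scalar[OF Dn_adj_carrier assms(2) assms(1)] Dn_adj_transpose by simp

lemma dot_pow:
  assumes w: "w \<in> carrier_vec n" and ev: "Dn_adj n *\<^sub>v w = l \<cdot>\<^sub>v w"
  shows "x \<in> carrier_vec n \<Longrightarrow> w \<bullet> ((Dn_adj n ^\<^sub>m k) *\<^sub>v x) = l^k * (w \<bullet> x)"
proof (induction k arbitrary: x)
  case 0
  have "Dn_adj n ^\<^sub>m 0 = 1\<^sub>m n" by (simp add: Dn_adj_def)
  then show ?case using 0 by simp
next
  case (Suc k)
  have Ax: "Dn_adj n *\<^sub>v x \<in> carrier_vec n" using Dn_adj_carrier Suc.prems by (rule mult_mat_vec_carrier)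
  have "(Dn_adj n ^\<^sub>m Suc k) *\<^sub>v x = (Dn_adj n ^\<^sub>m k) *\<^sub>v (Dn_adj n *\<^sub>v x)"
    using assoc_mult_mat_vec[OF pow_carrier_mat[OF Dn_adj_carrier] Dn_adj_carrier Suc.prems] by simp
  then have "w \<bullet> ((Dn_adj n ^\<^sub>m Suc k) *\<^sub>v x) = l^k * (w \<bullet> (Dn_adj n *\<^sub>v x))"
    using Suc.IH[OF Ax] by simp
  also have "w \<bullet> (Dn_adj n *\<^sub>v x) = l * (w \<bullet> x)"
    unfolding dot_sym[OF w Suc.prems] ev using smult_scalar_prod_distrib[OF w Suc.prems] by simp
  finally show ?case by simp
qed

definition y1 :: "nat \<Rightarrow> real vec" where
  "y1 n = vec n (\<lambda>i. if i = 0 then 1 else if i = 1 then -1 else 0)"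

lemma y1_carrier: "y1 n \<in> carrier_vec n" unfolding y1_def by simp

lemma y1_eig: assumes n: "n \<ge> 4" shows "Dn_adj n *\<^sub>v y1 n = 0 \<cdot>\<^sub>v y1 n"
proof (rule eq_vecI)
  show "dim_vec (Dn_adj n *\<^sub>v y1 n) = dim_vec (0 \<cdot>\<^sub>v y1 n)" by (simp add: Dn_adj_def y1_def)
  fix i assume "i < dim_vec (0 \<cdot>\<^sub>v y1 n)"
  then have i: "i < n" by (simp add: y1_def)
  have "\<not> n - 2 < 2" "n - 2 < n" using n by auto
  then show "(Dn_adj n *\<^sub>v y1 n) $ i = (0 \<cdot>\<^sub>v y1 n) $ i"
    unfolding Dn_adj_mult'[OF n y1_carrier i] using i n by (auto simp: y1_def)
qed

lemma sum_split01:
  assumes "(n::nat) \<ge> 4"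
  shows "(\<Sum>i\<in>{0..<n}. (f i :: real)) = f 0 + f 1 + (\<Sum>i\<in>{2..<n}. f i)"
proof -
  have "{0..<n} = {0,1} \<union> {2..<n}" using assms by auto
  then show ?thesis by (simp add: sum.union_disjoint)
qed

lemma y1_e: assumes n: "n \<ge> 4" shows "y1 n \<bullet> ee n = 0"
proof -
  have "y1 n \<bullet> ee n = (\<Sum>i\<in>{0..<n}. y1 n $ i)" by (simp add: scalar_prod_def y1_def)
  also have "\<dots> = 0" unfolding sum_split01[OF n] using n by (simp add: y1_def)
  finally show ?thesis .
qed

lemma walk_carrier: "walk_matrix n A \<in> carrier_mat n n" unfolding walk_matrix_def by simp

lemma powe_carrier: "(Dn_adj n ^\<^sub>m k) *\<^sub>v ee n \<in> carrier_vec n"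
  using pow_carrier_mat[OF Dn_adj_carrier] by (rule mult_mat_vec_carrier) simp

lemma walk_col: assumes "j < n" shows "col (walk_matrix n (Dn_adj n)) j = (Dn_adj n ^\<^sub>m j) *\<^sub>v ee n"
  unfolding walk_matrix_def using assms powe_carrier[of n j]
  by (intro eq_vecI) (auto simp del: index_mult_mat_vec)

lemma poly_zero:
  fixes c :: "nat \<Rightarrow> real" and lam :: "nat \<Rightarrow> real"
  assumes inj: "inj_on lam J" and card: "card J = r" and r: "r > 0"
    and z: "\<And>j. j \<in> J \<Longrightarrow> (\<Sum>k<r. c k * lam j ^ k) = 0"
    and k: "k < r"
  shows "c k = 0"
proof -
  define p where "p = (\<Sum>i<r. monom (c i) i)"
  have ev: "poly p x = (\<Sum>i<r. c i * x ^ i)" for x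
    unfolding p_def poly_sum by (simp add: poly_monom)
  have deg: "degree p \<le> r - 1"
    unfolding p_def by (rule degree_sum_le) (use degree_monom_le order_trans in \<open>auto intro: order_trans[OF degree_monom_le]\<close>)
  have cardL: "card (lam ` J) = r" using card_image[OF inj] card by simp
  have "p = 0"
  proof (rule poly_eqI_degree[of "lam ` J"])
    fix x assume "x \<in> lam ` J"
    then show "poly p x = poly 0 x" using z ev by auto
  next
    show "degree p < card (lam ` J)" using deg cardL r by simp
  next
    show "degree (0::real poly) < card (lam ` J)" using cardL r by simp
  qed
  then have "coeff p k = 0" by simp
  moreover have "coeff p k = c k"
    unfolding p_def coeff_sum using k by (simp add: coeff_monom)
  ultimately show ?thesis by simp
qed


definition JJ :: "nat \<Rightarrow> nat set" where
  "JJ n = {j. j < n - 1 \<and> \<not> (4 dvd n \<and> 2*j+2 = n)}"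

lemma JJ_card: assumes n: "n \<ge> 4" shows "card (JJ n) = (if 4 dvd n then n - 2 else n - 1)"
proof (cases "4 dvd n")
  case True
  have "JJ n = {..<n-1} - {n div 2 - 1}" unfolding JJ_def using True n by auto
  moreover have "n div 2 - 1 \<in> {..<n-1}" using n by auto
  ultimately show ?thesis using True n by (simp add: card_Diff_singleton)
next
  case False
  then have "JJ n = {..<n-1}" unfolding JJ_def by auto
  then show ?thesis using False by simp
qed

lemma wv_pow:
  assumes n: "n \<ge> 4"
  shows "wv n (th n j) \<bullet> ((Dn_adj n ^\<^sub>m k) *\<^sub>v ee n) = (2 * cos (th n j))^k * (wv n (th n j) \<bullet> ee n)"
  by (rule dot_pow[OF wv_carrier wv_eig[OF n th_cos[OF n]]]) simp

lemma key_indep: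
  assumes n: "n \<ge> 4"
    and z: "\<And>j. j \<in> JJ n \<Longrightarrow> (\<Sum>k<card (JJ n). c k * (wv n (th n j) \<bullet> ((Dn_adj n ^\<^sub>m k) *\<^sub>v ee n))) = 0"
    and k: "k < card (JJ n)"
  shows "c k = 0"
proof (rule poly_zero[where lam = "\<lambda>j. 2 * cos (th n j)" and J = "JJ n"])
  show "inj_on (\<lambda>j. 2 * cos (th n j)) (JJ n)"
    by (rule inj_on_subset[OF th_inj[OF n]]) (auto simp: JJ_def)
  show "card (JJ n) = card (JJ n)" ..
  show "card (JJ n) > 0" using k by simp
  show "k < card (JJ n)" by fact
  fix j assume j: "j \<in> JJ n"
  have S: "wv n (th n j) \<bullet> ee n \<noteq> 0" using j by (intro S_nonzero[OF n]) (auto simp: JJ_def)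
  have "(\<Sum>k<card (JJ n). c k * (2 * cos (th n j)) ^ k) * (wv n (th n j) \<bullet> ee n) = 0"
    using z[OF j] unfolding wv_pow[OF n] sum_distrib_right by (simp add: mult_ac)
  then show "(\<Sum>k<card (JJ n). c k * (2 * cos (th n j)) ^ k) = 0" using S by simp
qed

lemma dot_matvec:
  fixes w :: "real vec"
  assumes w: "w \<in> carrier_vec n" and M: "M \<in> carrier_mat n r" and v: "v \<in> carrier_vec r"
  shows "w \<bullet> (M *\<^sub>v v) = (\<Sum>k<r. v $ k * (w \<bullet> col M k))"
proof -
  have "w \<bullet> (M *\<^sub>v v) = (\<Sum>i\<in>{0..<n}. w $ i * (\<Sum>k\<in>{0..<r}. M $$ (i,k) * v $ k))"
    using w M v by (simp add: scalar_prod_def)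
  also have "\<dots> = (\<Sum>i\<in>{0..<n}. \<Sum>k\<in>{0..<r}. w $ i * M $$ (i,k) * v $ k)"
    by (simp add: sum_distrib_left mult_ac)
  also have "\<dots> = (\<Sum>k\<in>{0..<r}. \<Sum>i\<in>{0..<n}. w $ i * M $$ (i,k) * v $ k)"
    by (rule sum.swap)
  also have "\<dots> = (\<Sum>k\<in>{0..<r}. (\<Sum>i\<in>{0..<n}. w $ i * M $$ (i,k)) * v $ k)"
    by (simp add: sum_distrib_right)
  also have "\<dots> = (\<Sum>k\<in>{0..<r}. v $ k * (\<Sum>i\<in>{0..<n}. w $ i * M $$ (i,k)))"
    by (simp add: mult.commute)
  also have "\<dots> = (\<Sum>k<r. v $ k * (w \<bullet> col M k))"
    using w M by (intro sum.cong) (auto simp: scalar_prod_def)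
  finally show ?thesis .
qed

lemma rank_lower:
  assumes n: "n \<ge> 4"
  shows "card (JJ n) \<le> vec_space.rank n (walk_matrix n (Dn_adj n))"
proof -
  interpret vs: vec_space "TYPE(real)" n .
  define r where "r = card (JJ n)"
  have rn: "r \<le> n" unfolding r_def JJ_card[OF n] by simp
  define M where "M = mat n r (\<lambda>(i,k). ((Dn_adj n ^\<^sub>m k) *\<^sub>v ee n) $ i)"
  have Mc: "M \<in> carrier_mat n r" unfolding M_def by simp
  have colM: "col M k = (Dn_adj n ^\<^sub>m k) *\<^sub>v ee n" if "k < r" for k
    unfolding M_def using that powe_carrier[of n k]
    by (intro eq_vecI) (auto simp del: index_mult_mat_vec)
  have key: "c k = 0" if "\<And>j. j \<in> JJ n \<Longrightarrow> (\<Sum>k<r. c k * (wv n (th n j) \<bullet> col M k)) = 0" "k < r" for c k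
  proof (rule key_indep[OF n, where c = c])
    fix j assume j: "j \<in> JJ n"
    have "(\<Sum>k<r. c k * (wv n (th n j) \<bullet> col M k)) =
          (\<Sum>k<r. c k * (wv n (th n j) \<bullet> ((Dn_adj n ^\<^sub>m k) *\<^sub>v ee n)))"
      by (intro sum.cong) (auto simp: colM)
    then show "(\<Sum>k<card (JJ n). c k * (wv n (th n j) \<bullet> ((Dn_adj n ^\<^sub>m k) *\<^sub>v ee n))) = 0"
      using that(1)[OF j] r_def by simp
  next
    show "k < card (JJ n)" using that(2) r_def by simp
  qed
  have dist: "distinct (cols M)"
  proof (rule ccontr)
    assume "\<not> distinct (cols M)"
    then obtain a b where ab: "a < r" "b < r" "a \<noteq> b" "col M a = col M b"
      unfolding distinct_conv_nth using Mc by auto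
    define c where "c = (\<lambda>k::nat. if k = a then 1 else if k = b then -1 else (0::real))"
    have "c a = 0"
    proof (rule key)
      fix j assume j: "j \<in> JJ n"
      let ?d = "\<lambda>k. wv n (th n j) \<bullet> col M k"
      have "(\<Sum>k<r. c k * ?d k) = (\<Sum>k<r. (if k = a then ?d a else 0) - (if k = b then ?d b else 0))"
        by (intro sum.cong) (auto simp: c_def ab(3))
      also have "\<dots> = ?d a - ?d b" using ab by (simp add: sum_subtractf)
      also have "\<dots> = 0" using ab(4) by simp
      finally show "(\<Sum>k<r. c k * ?d k) = 0" .
    next
      show "a < r" by fact
    qed
    then show False unfolding c_def by simp
  qed
  have indep: "vs.lin_indpt (set (cols M))"
  proof
    assume dep: "vs.lin_dep (set (cols M))"
    obtain v where v: "v \<in> carrier_vec r" "v \<noteq> 0\<^sub>v r" "M *\<^sub>v v = 0\<^sub>v n"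
      using vs.lin_depE[OF Mc dep dist] by blast
    have "v $ k = 0" if k: "k < r" for k
    proof (rule key[OF _ k])
      fix j assume j: "j \<in> JJ n"
      have "wv n (th n j) \<bullet> (M *\<^sub>v v) = (\<Sum>k<r. v $ k * (wv n (th n j) \<bullet> col M k))"
        by (rule dot_matvec[OF wv_carrier Mc v(1)])
      moreover have "wv n (th n j) \<bullet> (M *\<^sub>v v) = 0" unfolding v(3) using wv_carrier by simp
      ultimately show "(\<Sum>k<r. v $ k * (wv n (th n j) \<bullet> col M k)) = 0" by simp
    qed
    then have "v = 0\<^sub>v r" using v(1) by (intro eq_vecI) auto
    then show False using v(2) by simp
  qed
  have sub: "set (cols M) \<subseteq> set (cols (walk_matrix n (Dn_adj n)))"
  proof
    fix x assume "x \<in> set (cols M)"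
    then obtain k where k: "k < r" "x = col M k" using Mc by (auto simp: in_set_conv_nth)
    have "x = col (walk_matrix n (Dn_adj n)) k" using k rn colM walk_col[of k n] by simp
    moreover have "k < dim_col (walk_matrix n (Dn_adj n))" using k rn by (simp add: walk_matrix_def)
    ultimately show "x \<in> set (cols (walk_matrix n (Dn_adj n)))" by (auto simp: in_set_conv_nth)
  qed
  have "card (set (cols M)) = r" using distinct_card[OF dist] Mc by simp
  then show ?thesis
    using vs.rank_ge_card_indpt[OF walk_carrier sub indep] r_def by simp
qed


definition Vy :: "nat \<Rightarrow> real vec \<Rightarrow> real vec set" where
  "Vy n y = {x \<in> carrier_vec n. y \<bullet> x = 0}"

lemma Vy_submodule:
  assumes y: "y \<in> carrier_vec n"
  shows "submodule class_ring (Vy n y) (module_vec TYPE(real) n)"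
proof -
  interpret vs: vec_space "TYPE(real)" n .
  show ?thesis
  proof (rule submodule.intro)
    show "module class_ring (module_vec TYPE(real) n)" by (rule vs.module_axioms)
    show "Vy n y \<subseteq> carrier (module_vec TYPE(real) n)" unfolding Vy_def by auto
    fix v w assume "v \<in> Vy n y" "w \<in> Vy n y"
    then show "v \<oplus>\<^bsub>module_vec TYPE(real) n\<^esub> w \<in> Vy n y"
      unfolding Vy_def using y by (auto simp: scalar_prod_add_distrib)
  next
    show "\<zero>\<^bsub>module_vec TYPE(real) n\<^esub> \<in> Vy n y" unfolding Vy_def using y by simp
  next
    fix c :: real and v assume "c \<in> carrier class_ring" "v \<in> Vy n y"
    then show "c \<odot>\<^bsub>module_vec TYPE(real) n\<^esub> v \<in> Vy n y"
      unfolding Vy_def using y by (auto simp: scalar_prod_smult_distrib)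
  qed
qed

lemma cols_orth:
  assumes n: "n \<ge> 4" and x: "x \<in> set (cols (walk_matrix n (Dn_adj n)))"
  shows "y1 n \<bullet> x = 0" "4 dvd n \<Longrightarrow> wv n (pi/2) \<bullet> x = 0"
proof -
  obtain k where k: "k < n" "x = col (walk_matrix n (Dn_adj n)) k"
    using x by (auto simp: in_set_conv_nth walk_matrix_def)
  then have xk: "x = (Dn_adj n ^\<^sub>m k) *\<^sub>v ee n" using walk_col by simp
  have ec: "ee n \<in> carrier_vec n" by simp
  show "y1 n \<bullet> x = 0" unfolding xk using dot_pow[OF y1_carrier y1_eig[OF n] ec, of k] y1_e[OF n] by simp
  assume d: "4 dvd n"
  note Z = S_zero[OF n d]
  have "wv n (th n (n div 2 - 1)) \<bullet> x = 0" using wv_pow[OF n, of "n div 2 - 1" k] Z(3) xk by simp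
  then show "wv n (pi/2) \<bullet> x = 0" unfolding Z(2) .
qed

lemma rank_upper:
  assumes n: "n \<ge> 4"
  shows "vec_space.rank n (walk_matrix n (Dn_adj n)) + (if 4 dvd n then 2 else 1) \<le> n"
proof -
  interpret vs: vec_space "TYPE(real)" n .
  let ?W = "walk_matrix n (Dn_adj n)"
  let ?P = "\<lambda>T. T \<subseteq> set (cols ?W) \<and> vs.lin_indpt T"
  have P0: "?P {}"
    by (metis (no_types) empty_subsetI vs.fin_dim vs.finite_basis_exists vs.subset_li_is_li vs.basis_def)
  obtain T where T: "finite T" "maximal T ?P"
    using maximal_exists_superset[of "set (cols ?W)" ?P "{}"] P0 by auto
  have rk: "vs.rank ?W = card T" by (rule vs.rank_card_indpt[OF walk_carrier T(2)])
  have TW: "T \<subseteq> set (cols ?W)" and Tli: "vs.lin_indpt T" using T(2) unfolding maximal_def by auto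
  have colsc: "set (cols ?W) \<subseteq> carrier_vec n" using cols_dim[of ?W] by (simp add: walk_matrix_def)
  have Tc: "T \<subseteq> carrier_vec n" using TW colsc by auto
  have y1y1: "y1 n \<bullet> y1 n = 2"
  proof -
    have "y1 n \<bullet> y1 n = (\<Sum>i\<in>{0..<n}. y1 n $ i * y1 n $ i)" by (simp add: scalar_prod_def y1_def)
    also have "\<dots> = 2" unfolding sum_split01[OF n] using n by (simp add: y1_def)
    finally show ?thesis .
  qed
  have TV1: "T \<subseteq> Vy n (y1 n)" using TW cols_orth(1)[OF n] colsc unfolding Vy_def by auto
  have sp1: "vs.span T \<subseteq> Vy n (y1 n)" by (rule vs.span_is_subset[OF TV1 Vy_submodule[OF y1_carrier]])
  have y1nV: "y1 n \<notin> Vy n (y1 n)" unfolding Vy_def using y1y1 by auto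
  have y1T: "y1 n \<notin> T" using TV1 y1nV by auto
  have li1: "vs.lin_indpt (T \<union> {y1 n})"
    using vs.lin_dep_iff_in_span[OF _ Tli _ y1T] Tc y1_carrier sp1 y1nV by auto
  have c1: "card (T \<union> {y1 n}) = card T + 1" using T(1) y1T by simp
  have T1c: "T \<union> {y1 n} \<subseteq> carrier_vec n" using Tc y1_carrier by auto
  show ?thesis
  proof (cases "4 dvd n")
    case False
    have "card (T \<union> {y1 n}) \<le> n" using vs.li_le_dim(2)[OF vs.fin_dim _ li1] T1c vs.dim_is_n by simp
    then show ?thesis using False rk c1 by simp
  next
    case True
    let ?y = "wv n (pi/2)"
    have yc: "?y \<in> carrier_vec n" by (rule wv_carrier)
    have yy: "?y \<bullet> ?y > 0"
    proof -
      have "?y \<bullet> ?y = (\<Sum>i\<in>{0..<n}. ?y $ i * ?y $ i)" by (simp add: scalar_prod_def wv_def)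
      also have "\<dots> \<ge> ?y $ (n-1) * ?y $ (n-1)"
        by (rule member_le_sum) (use n in auto)
      also have "?y $ (n-1) = 1" using n by (simp add: wv_def)
      finally show ?thesis by simp
    qed
    have yy1: "?y \<bullet> y1 n = 0"
    proof -
      have "?y \<bullet> y1 n = (\<Sum>i\<in>{0..<n}. ?y $ i * y1 n $ i)" by (simp add: scalar_prod_def y1_def)
      also have "\<dots> = 0" unfolding sum_split01[OF n] using n by (simp add: y1_def wv_def)
      finally show ?thesis .
    qed
    have TV2: "T \<union> {y1 n} \<subseteq> Vy n ?y" using TW cols_orth(2)[OF n _ True] colsc yy1 y1_carrier
      unfolding Vy_def by auto
    have sp2: "vs.span (T \<union> {y1 n}) \<subseteq> Vy n ?y" by (rule vs.span_is_subset[OF TV2 Vy_submodule[OF yc]])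
    have ynV: "?y \<notin> Vy n ?y" unfolding Vy_def using yy by auto
    have yT: "?y \<notin> T \<union> {y1 n}" using TV2 ynV by blast
    have li2: "vs.lin_indpt (T \<union> {y1 n} \<union> {?y})"
      using vs.lin_dep_iff_in_span[OF T1c li1 yc yT] sp2 ynV by auto
    have c2: "card (T \<union> {y1 n} \<union> {?y}) = card T + 2" using T(1) y1T yT c1 by simp
    have "card (T \<union> {y1 n} \<union> {?y}) \<le> n"
      using vs.li_le_dim(2)[OF vs.fin_dim _ li2] T1c yc vs.dim_is_n by simp
    then show ?thesis using True rk c2 by simp
  qed
qed

theorem mainTheorem2:
  fixes n :: nat
  assumes "n \<ge> 4"
  shows "vec_space.rank n (walk_matrix n (Dn_adj n)) =
           (if 4 dvd n then n - 2 else n - 1)"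
  using rank_lower[OF assms] rank_upper[OF assms] JJ_card[OF assms]
  by (auto split: if_splits)

end
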